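(* Let $r,q$ be positive integers, $k\ge1$ and $p_1,\dots,p_k\ge1$ integers. For an integer vector $y=\langle s_1;a_{11},\dots,a_{1p_1}:\cdots:s_k;a_{k1},\dots,a_{kp_k}\,|\,\nu\rangle\in\mathbb{Z}^{k+1+\sum_i p_i}$ (entries $s_i,a_{ij},\nu$ arbitrary integers, possibly negative) and an integer $n$, define $$h(n,y)=\left\lceil\frac{rn}{q}\right\rceil-\sum_{i=1}^k\left\lceil\frac{r\left(n-s_i-\sum_{j=1}^{p_i}\left\lceil\frac{r(n-a_{ij})}{q}\right\rceil\right)}{q}\right\rceil-\nu.$$ Let $\sim$ be the equivalence relation on such vectors generated by the moves: (i) for some fixed $i,j$ and some $d\in\mathbb{Z}$, replace $s_i$ by $s_i+dr$ and $a_{ij}$ by $a_{ij}+dq$ (all other entries unchanged); (ii) for some fixed $i$ and some $c\in\mathbb{Z}$, replace $s_i$ by $s_i+cq$ and $\nu$ by $\nu+cr$ (all other entries unchanged). If $y\sim y'$, then $h(n,y)=h(n,y')$ for every integer $n$. *)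

theory Defs
  imports Complex_Main
begin

text \<open>A vector y = <s_1; a_11..a_1p1 : ... : s_k; a_k1..a_kpk | nu> is represented as a
triple (ss, as, nu) with ss = [s_1,...,s_k], as = [[a_11,...,a_1p1],...,[a_k1,...,a_kpk]].\<close>

type_synonym vec = "int list \<times> int list list \<times> int"

definition wf_vec :: "vec \<Rightarrow> bool" where
  "wf_vec y = (case y of (ss, as, \<nu>) \<Rightarrow>
     length ss \<ge> 1 \<and> length as = length ss \<and> (\<forall>i < length as. length (as ! i) \<ge> 1))"

definition hfun :: "int \<Rightarrow> int \<Rightarrow> int \<Rightarrow> vec \<Rightarrow> int" where
  "hfun r q n y = (case y of (ss, as, \<nu>) \<Rightarrow>
     \<lceil>real_of_int (r * n) / real_of_int q\<rceil>
     - (\<Sum>i<length ss. \<lceil>real_of_int (r * (n - ss ! i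
          - (\<Sum>j<length (as ! i). \<lceil>real_of_int (r * (n - as ! i ! j)) / real_of_int q\<rceil>)))
          / real_of_int q\<rceil>)
     - \<nu>)"

definition move :: "int \<Rightarrow> int \<Rightarrow> vec \<Rightarrow> vec \<Rightarrow> bool" where
  "move r q y y' = (case y of (ss, as, \<nu>) \<Rightarrow>
     (\<exists>i j d. i < length ss \<and> i < length as \<and> j < length (as ! i) \<and>
        y' = (ss[i := ss ! i + d * r], as[i := (as ! i)[j := as ! i ! j + d * q]], \<nu>))
   \<or> (\<exists>i c. i < length ss \<and> y' = (ss[i := ss ! i + c * q], as, \<nu> + c * r)))"

end

theory Submission
  imports Defs
begin

lemma g_shift:
  fixes r q x d :: int assumes "q \<noteq> 0"
  shows "\<lceil>real_of_int (r * (x - d * q)) / real_of_int q\<rceil>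
       = \<lceil>real_of_int (r * x) / real_of_int q\<rceil> - d * r"
proof -
  have "real_of_int (r * (x - d * q)) / real_of_int q
      = real_of_int (r * x) / real_of_int q + real_of_int (- (d * r))"
    using assms by (simp add: field_simps)
  then show ?thesis by (simp only: ceiling_add_of_int)
qed

lemma sum_upd:
  fixes f f' :: "nat \<Rightarrow> int"
  assumes "j < m" "\<And>k. k < m \<Longrightarrow> k \<noteq> j \<Longrightarrow> f' k = f k" "f' j = f j + c"
  shows "(\<Sum>k<m. f' k) = (\<Sum>k<m. f k) + c"
proof -
  have "(\<Sum>k<m. f' k) = f' j + (\<Sum>k\<in>{..<m}-{j}. f' k)"
    using assms(1) by (simp add: sum.remove)
  also have "(\<Sum>k\<in>{..<m}-{j}. f' k) = (\<Sum>k\<in>{..<m}-{j}. f k)"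
    using assms(2) by (intro sum.cong) auto
  also have "(\<Sum>k<m. f k) = f j + (\<Sum>k\<in>{..<m}-{j}. f k)"
    using assms(1) by (simp add: sum.remove)
  ultimately show ?thesis using assms(3) by simp
qed

lemma move_h:
  assumes "q > 0" "move r q y y'"
  shows "hfun r q n y = hfun r q n y'"
proof -
  obtain ss as \<nu> where y: "y = (ss, as, \<nu>)" by (cases y) auto
  have q0: "q \<noteq> 0" using assms by simp
  let ?g = "\<lambda>x. \<lceil>real_of_int (r * x) / real_of_int q\<rceil>"
  show ?thesis
  using assms(2) unfolding y move_def
  proof (simp only: prod.case, elim disjE exE conjE)
    fix i j d
    assume i: "i < length ss" "i < length as" and j: "j < length (as ! i)"
      and y': "y' = (ss[i := ss ! i + d * r], as[i := (as ! i)[j := as ! i ! j + d * q]], \<nu>)"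
    define as' where "as' = as[i := (as ! i)[j := as ! i ! j + d * q]]"
    define ss' where "ss' = ss[i := ss ! i + d * r]"
    have inner: "(\<Sum>j<length (as' ! i). ?g (n - as' ! i ! j))
        = (\<Sum>j<length (as ! i). ?g (n - as ! i ! j)) + (- (d*r))"
    proof -
      have l: "length (as' ! i) = length (as ! i)" using i by (simp add: as'_def)
      show ?thesis unfolding l
        apply (rule sum_upd[OF j])
        using i j q0 g_shift[OF q0, of r "n - as ! i ! j" d]
        by (auto simp: as'_def algebra_simps)
    qed
    have "(\<Sum>i<length ss'. ?g (n - ss' ! i - (\<Sum>j<length (as' ! i). ?g (n - as' ! i ! j))))
       = (\<Sum>i<length ss. ?g (n - ss ! i - (\<Sum>j<length (as ! i). ?g (n - as ! i ! j))))"
    proof (rule sum.cong)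
      show "{..<length ss'} = {..<length ss}" by (simp add: ss'_def)
    next
      fix k assume "k \<in> {..<length ss}"
      show "?g (n - ss' ! k - (\<Sum>j<length (as' ! k). ?g (n - as' ! k ! j)))
          = ?g (n - ss ! k - (\<Sum>j<length (as ! k). ?g (n - as ! k ! j)))"
      proof (cases "k = i")
        case True
        have "n - ss' ! k - (\<Sum>j<length (as' ! k). ?g (n - as' ! k ! j))
            = n - ss ! k - (\<Sum>j<length (as ! k). ?g (n - as ! k ! j))"
          using True inner i by (simp add: ss'_def)
        then show ?thesis by (simp only:)
      next
        case False
        then show ?thesis by (simp add: ss'_def as'_def)
      qed
    qed
    then show "hfun r q n (ss, as, \<nu>) = hfun r q n y'"
      unfolding y' hfun_def ss'_def[symmetric] as'_def[symmetric] by simp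
  next
    fix i c
    assume i: "i < length ss" and y': "y' = (ss[i := ss ! i + c * q], as, \<nu> + c * r)"
    define ss' where "ss' = ss[i := ss ! i + c * q]"
    let ?F = "\<lambda>ss i. ?g (n - ss ! i - (\<Sum>j<length (as ! i). ?g (n - as ! i ! j)))"
    have "(\<Sum>k<length ss. ?F ss' k) = (\<Sum>k<length ss. ?F ss k) + (- (c*r))"
      apply (rule sum_upd[OF i])
      using i g_shift[OF q0, of r "n - ss ! i - (\<Sum>j<length (as ! i). ?g (n - as ! i ! j))" c]
      by (auto simp: ss'_def algebra_simps)
    then show "hfun r q n (ss, as, \<nu>) = hfun r q n y'"
      unfolding y' hfun_def ss'_def[symmetric] by (simp add: ss'_def)
  qed
qed

theorem theorem2:
  fixes r q n :: int and y y' :: vec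
  assumes "r > 0" and "q > 0"
    and "wf_vec y" and "wf_vec y'"
    and "equivclp (move r q) y y'"
  shows "hfun r q n y = hfun r q n y'"
  using assms(5)
proof (induction rule: equivclp_induct)
  case base
  then show ?case by simp
next
  case (step z w)
  from step.hyps(2) have "move r q z w \<or> move r q w z" by (auto simp: symclp_def)
  then show ?case using step.IH move_h[OF assms(2), where y=z and y'=w and n=n] move_h[OF assms(2), where y=w and y'=z and n=n] by auto
qed

end
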